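(* Let $h>0$, let $N_t$ be a positive integer and $T=\sqrt{N_t h/4}$. For $u>0$ and $x\in[0,1]$ let $$f(u,x) = \frac{x}{\pi}\,\frac{1}{\sqrt{u}}\,\frac{e^{\sqrt{u}-T}}{e^{2(\sqrt{u}-T)}+x},\qquad I(x)=\int_0^{4T^2} f(u,x)\,du,\qquad S(x) = h\sum_{j=1}^{N_t} f(jh,x).$$ Then for every $x\in[0,e^{4-2T}]$, $$|I(x)-S(x)| < 2e^{2-T} < 15\,e^{-T}.$$ *)

theory Defs
  imports "HOL-Analysis.Analysis"
begin

definition fA2 :: "real \<Rightarrow> real \<Rightarrow> real \<Rightarrow> real" where
  "fA2 T u x = (x / pi) * (1 / sqrt u) * (exp (sqrt u - T) / (exp (2 * (sqrt u - T)) + x))"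

end

theory Submission
  imports Defs
begin
lemma half_times_two: "(b / 2 :: real) * 2 = b" by simp

lemma integral_part:
  fixes T x :: real
  assumes x: "0 < x" and T: "0 < T"
  defines "F \<equiv> \<lambda>u. 2 * sqrt x / pi * arctan (exp (sqrt u - T) / sqrt x)"
  shows "((\<lambda>u. fA2 T u x) has_integral (F (4*T^2) - F 0)) {0..4*T^2}"
proof (rule fundamental_theorem_of_calculus_interior)
  show "0 \<le> 4*T^2" by simp
  show "continuous_on {0..4 * T\<^sup>2} F" unfolding F_def
    by (intro continuous_intros) (use x in auto)
  fix u assume u: "u \<in> {0<..<4*T^2}"
  then have u0: "0 < u" by simp
  have sx: "0 < sqrt x" using x by simp
  have su: "0 < sqrt u" using u0 by simp
  have e2: "exp (2 * (sqrt u - T)) = exp (sqrt u - T) * exp (sqrt u - T)"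
    by (metis mult_2 exp_add)
  have xx: "sqrt x * sqrt x = x" using x by simp
  have "(F has_real_derivative fA2 T u x) (at u)"
    unfolding F_def using u0 x
    apply (auto intro!: derivative_eq_intros)
    unfolding fA2_def e2 using sx su x xx
    apply (simp add: field_simps power2_eq_square)
    done
  then show "(F has_vector_derivative fA2 T u x) (at u)"
    by (simp add: has_real_derivative_iff_has_vector_derivative)
qed
lemma sum_step:
  fixes T x h :: real and j :: nat
  assumes x: "0 < x" and h: "0 < h" and j: "1 \<le> j"
  defines "P \<equiv> \<lambda>s. 5/2 * sqrt x / pi * (s - ln (sqrt x + exp (s - T)))"
  shows "h * fA2 T (real j * h) x \<le> P (sqrt (real j * h)) - P (sqrt (real (j-1) * h))"
proof -
  define r where "r = sqrt x"
  define a where "a = sqrt (real (j-1) * h)"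
  define b where "b = sqrt (real j * h)"
  define K where "K = (\<lambda>s. 5/2 * x / pi / (r + exp (s - T)))"
  have r0: "0 < r" and rr: "r * r = x" using x by (auto simp: r_def)
  have a0: "0 \<le> a" using h by (simp add: a_def)
  have b0: "0 < b" using h j by (simp add: b_def)
  have aa: "a * a = real (j-1) * h" using h unfolding a_def by (simp)
  have bb: "b * b = real j * h" using h j unfolding b_def by (simp)
  have hab: "h = b*b - a*a" using aa bb j by (simp add: of_nat_diff algebra_simps)
  have ab: "a < b"
  proof (rule ccontr)
    assume "\<not> a < b"
    then have "b*b \<le> a*a" using b0 by (intro mult_mono) auto
    with hab h show False by simp
  qed
  define E where "E = exp (b - T)"
  have E0: "0 < E" by (simp add: E_def)
  have e2: "exp (2 * (b - T)) = E * E" unfolding E_def by (metis mult_2 exp_add)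
  have f: "fA2 T (real j * h) x = x / pi * (1 / b) * (E / (E*E + x))"
    unfolding fA2_def b_def[symmetric] E_def[symmetric] e2 ..
  have step1: "h * fA2 T (real j * h) x \<le> (b - a) * K b"
  proof -
    have "h \<le> (b - a) * (2 * b)" using hab ab a0 b0
    proof -
      have "0 \<le> (b-a)*(b-a)" by simp
      then show ?thesis using hab by (simp add: algebra_simps)
    qed
    have q: "2 * E / (E*E + x) \<le> 5/2 / (r + E)"
    proof -
      have "0 \<le> (E - 2*r)*(E-2*r) + x" using x by simp
      then have "4 * E * (r + E) \<le> 5 * (E*E + x)"
        using rr by (simp add: algebra_simps)
      moreover have "0 < E*E + x" "0 < r + E" using E0 r0 x by (auto intro: add_pos_pos)
      ultimately show ?thesis by (simp add: divide_simps algebra_simps)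
    qed
    have "h * fA2 T (real j * h) x = h / b * (x / pi) * (E / (E*E + x))"
      unfolding f by (simp add: ac_simps)
    also have "\<dots> \<le> (b - a) * 2 * (x / pi) * (E / (E*E + x))"
    proof -
      have "h / b \<le> (b - a) * 2" using \<open>h \<le> (b - a) * (2 * b)\<close> b0
        by (simp only: pos_divide_le_eq[OF b0])
      moreover have "0 \<le> (x / pi) * (E / (E*E + x))" using x E0 by simp
      ultimately show ?thesis by (metis mult.assoc mult_right_mono)
    qed
    also have "\<dots> = (b - a) * (x / pi) * (2 * E / (E*E + x))" by simp
    also have "\<dots> \<le> (b - a) * (x / pi) * (5/2 / (r + E))"
      using q ab x by (intro mult_left_mono) auto
    also have "\<dots> = (b - a) * K b" by (simp add: K_def E_def algebra_simps)
    finally show ?thesis .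
  qed
  have der: "\<And>s. (P has_real_derivative K s) (at s)"
  proof -
    fix s
    have pos: "0 < r + exp (s - T)" using r0 by (smt (verit) exp_gt_zero)
    show "(P has_real_derivative K s) (at s)"
      unfolding P_def r_def[symmetric] K_def using pos r0 rr
      apply (auto intro!: derivative_eq_intros)
      apply (simp add: field_simps)
      done
  qed
  obtain z where z: "a < z" "z < b" "P b - P a = (b - a) * K z"
    using MVT2[OF ab, of P K] der by blast
  have "K b \<le> K z" unfolding K_def using z r0 x
    by (intro divide_left_mono) (auto intro!: add_pos_pos mult_pos_pos)
  then have "(b - a) * K b \<le> (b - a) * K z" using ab by (simp add: mult_left_mono)
  with step1 z show ?thesis unfolding a_def b_def by linarith
qed

lemma telescope_1: fixes N :: nat shows "(\<Sum>j=1..N. (Q j - Q (j-1) :: real)) = Q N - Q 0"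
  by (induction N) (auto simp: sum.cl_ivl_Suc)

lemma ln_bound: "ln (1 + exp 2) < (5/2::real)"
proof -
  have a: "1 + 1/2 \<le> exp (1/2::real)" by (rule exp_ge_add_one_self)
  have b: "1 + 2 \<le> exp (2::real)" by (rule exp_ge_add_one_self)
  have "exp (5/2::real) = exp 2 * exp (1/2)" by (simp add: exp_add[symmetric])
  also have "\<dots> \<ge> exp 2 * (3/2)" using a by (intro mult_left_mono) auto
  finally have "1 + exp 2 < exp (5/2::real)" using b by linarith
  then have "ln (1 + exp 2) < ln (exp (5/2::real))"
    by (intro ln_less_cancel_iff[THEN iffD2]) (auto intro: add_pos_pos)
  then show ?thesis by simp
qed

lemma fA2_nonneg: "0 \<le> x \<Longrightarrow> 0 \<le> u \<Longrightarrow> 0 \<le> fA2 T u x"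
  unfolding fA2_def by (intro mult_nonneg_nonneg divide_nonneg_nonneg add_nonneg_nonneg) auto

lemma sum_part:
  fixes T x h :: real and Nt :: nat
  assumes x: "0 < x" and h: "0 < h" and N: "1 \<le> Nt" and T: "T = sqrt (real Nt * h / 4)"
    and xb: "sqrt x \<le> exp (2 - T)"
  shows "h * (\<Sum>j=1..Nt. fA2 T (real j * h) x) \<le> 5/2 * sqrt x / pi * ln (1 + exp 2)"
proof -
  define P where "P \<equiv> \<lambda>s. 5/2 * sqrt x / pi * (s - ln (sqrt x + exp (s - T)))"
  define r where "r = sqrt x"
  have r0: "0 < r" using x by (simp add: r_def)
  have T2: "sqrt (real Nt * h) = 2 * T" unfolding T
    by (simp add: real_sqrt_divide)
  have "h * (\<Sum>j=1..Nt. fA2 T (real j * h) x) = (\<Sum>j=1..Nt. h * fA2 T (real j * h) x)"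
    by (simp add: sum_distrib_left)
  also have "\<dots> \<le> (\<Sum>j=1..Nt. P (sqrt (real j * h)) - P (sqrt (real (j-1) * h)))"
    by (intro sum_mono) (use sum_step[OF x h] in \<open>auto simp: P_def\<close>)
  also have "\<dots> = P (2*T) - P 0"
    using telescope_1[of "\<lambda>j. P (sqrt (real j * h))" Nt] T2 by simp
  also have "\<dots> = 5/2 * r / pi * (2*T + ln (r + exp (-T)) - ln (r + exp T))"
  proof -
    define c where "c = 5/2 * r / pi"
    have Pc: "P = (\<lambda>s. c * (s - ln (r + exp (s - T))))" by (simp add: P_def c_def r_def)
    show ?thesis unfolding Pc c_def[symmetric] by (simp add: algebra_simps)
  qed
  also have "\<dots> \<le> 5/2 * r / pi * ln (1 + exp 2)"
  proof -
    have "exp T * r \<le> exp T * exp (2 - T)" using xb by (simp add: r_def)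
    also have "\<dots> = exp 2" by (simp add: exp_add[symmetric])
    finally have eT: "exp T * r \<le> exp 2" .
    have q1: "exp (2*T) = exp T * exp T" unfolding exp_double power2_eq_square ..
    have q2: "exp T * exp (-T) = 1" by (rule exp_minus_inverse)
    have "exp (2*T) * (r + exp (-T)) = exp T * (exp T * r + 1)"
      unfolding q1 using q2 by (simp add: algebra_simps)
    also have "\<dots> \<le> exp T * (exp 2 + 1)" using eT by simp
    also have "\<dots> \<le> (1 + exp 2) * (r + exp T)" using r0 by (simp add: algebra_simps)
    finally have le: "exp (2*T) * (r + exp (-T)) \<le> (1 + exp 2) * (r + exp T)" .
    have p1: "0 < r + exp (-T)" "0 < r + exp T" using r0 by (auto intro: add_pos_pos)
    have "2*T + ln (r + exp (-T)) = ln (exp (2*T) * (r + exp (-T)))"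
      using p1 by (simp add: ln_mult)
    also have "\<dots> \<le> ln ((1 + exp 2) * (r + exp T))"
      using le p1 by (intro ln_mono) auto
    also have "\<dots> = ln (1 + exp 2) + ln (r + exp T)"
      using p1 by (intro ln_mult_pos) (auto intro: add_pos_pos)
    finally have "2*T + ln (r + exp (-T)) - ln (r + exp T) \<le> ln (1 + exp 2)" by simp
    then show ?thesis using r0 by (intro mult_left_mono) auto
  qed
  finally show ?thesis by (simp add: r_def)
qed

theorem lemmaA2:
  fixes h :: real and Nt :: nat and T x :: real
  assumes "h > 0" and "Nt \<ge> 1" and "T = sqrt (real Nt * h / 4)"
    and "0 \<le> x" and "x \<le> exp (4 - 2 * T)"
  shows "\<bar>integral {0..4 * T^2} (\<lambda>u. fA2 T u x) - h * (\<Sum>j=1..Nt. fA2 T (real j * h) x)\<bar> < 2 * exp (2 - T)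
       \<and> 2 * exp (2 - T) < 15 * exp (- T)"
proof
  have T0: "0 < T" using assms(1,2,3) by simp
  show "2 * exp (2 - T) < 15 * exp (- T)"
  proof -
    have e1: "exp 1 < (272/100::real)" by (rule e_less_272)
    have "exp (2::real) = exp 1 * exp 1" by (simp add: exp_add[symmetric])
    also have "\<dots> < (272/100) * (272/100)" using e1 by (intro mult_strict_mono) auto
    finally have "exp (2::real) < 15/2" by simp
    moreover have "exp (2 - T) = exp 2 * exp (- T)" by (simp add: exp_add[symmetric])
    ultimately show ?thesis by simp
  qed
  show "\<bar>integral {0..4 * T^2} (\<lambda>u. fA2 T u x) - h * (\<Sum>j=1..Nt. fA2 T (real j * h) x)\<bar> < 2 * exp (2 - T)"
  proof (cases "x = 0")
    case True
    then show ?thesis by (simp add: fA2_def)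
  next
    case False
    then have x: "0 < x" using assms(4) by simp
    define r where "r = sqrt x"
    have r0: "0 < r" using x by (simp add: r_def)
    have sq: "sqrt (exp (4 - 2 * T)) = exp (2 - T)"
      by (rule real_sqrt_unique) (simp_all add: power2_eq_square exp_add[symmetric])
    have rb: "r \<le> exp (2 - T)" unfolding r_def sq[symmetric] using assms(5) by simp
    define F where "F \<equiv> \<lambda>u. 2 * sqrt x / pi * arctan (exp (sqrt u - T) / sqrt x)"
    have I: "integral {0..4 * T^2} (\<lambda>u. fA2 T u x) = F (4*T^2) - F 0"
      using integral_part[OF x T0] unfolding F_def by (rule integral_unique)
    have s4: "sqrt (4 * T^2) = 2 * T" using T0 by (simp add: real_sqrt_mult)
    have F1: "F (4*T^2) = 2 * r / pi * arctan (exp T / r)"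
      unfolding F_def s4 r_def by simp
    have F0: "F 0 = 2 * r / pi * arctan (exp (-T) / r)"
      unfolding F_def r_def by simp
    have "arctan (exp (-T) / r) \<le> arctan (exp T / r)"
      using r0 T0 by (intro arctan_monotone' divide_right_mono) auto
    then have "2 * r / pi * arctan (exp (-T) / r) \<le> 2 * r / pi * arctan (exp T / r)"
      by (rule mult_left_mono) (use r0 in auto)
    then have Ilo: "0 \<le> F (4*T^2) - F 0" unfolding F1 F0 by linarith
    have "F (4*T^2) - F 0 \<le> F (4*T^2)" unfolding F0 using r0 by simp
    also have "\<dots> < 2 * r / pi * (pi/2)" unfolding F1 using r0 arctan_ubound
      by (intro mult_strict_left_mono) auto
    also have "\<dots> = r" by simp
    finally have Ihi: "F (4*T^2) - F 0 < r" .
    have S: "h * (\<Sum>j=1..Nt. fA2 T (real j * h) x) \<le> 5/2 * r / pi * ln (1 + exp 2)"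
      using sum_part[OF x assms(1,2,3)] rb unfolding r_def by simp
    have "5/2 * r / pi * ln (1 + exp 2) \<le> 5/2 * r / pi * (5/2)"
      using ln_bound r0 by (intro mult_left_mono) auto
    also have "\<dots> < 2 * r"
    proof -
      have "3.141592653588 \<le> pi" by (rule pi_approx(1))
      then show ?thesis using r0 by (simp add: field_simps)
    qed
    finally have Shi: "h * (\<Sum>j=1..Nt. fA2 T (real j * h) x) < 2 * r" using S by linarith
    have Slo: "0 \<le> h * (\<Sum>j=1..Nt. fA2 T (real j * h) x)"
      using assms(1) x by (intro mult_nonneg_nonneg sum_nonneg) (auto intro!: fA2_nonneg)
    show ?thesis unfolding I using Ilo Ihi Slo Shi rb by linarith
  qed
qed

end
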